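(* Let $3\leq m\leq n$, $\ell=m-1$. If $m\leq\rho(n-1)$, then $\mathfrak{C}\not\subset\mathfrak{S}$.
   Context: $\rho$ is the Hurwitz–Radon function: $\rho(k)=2^b+8c$ where $k=(2a+1)2^{b+4c}$, $a,b,c\geq0$ integers, $0\leq b<4$. For $Y=(Y_1;\ldots;Y_\ell)\in\mathbb{R}^{n\times n\times\ell}$ and $\mathbf{a}\in\mathbb{R}^m$, $M(\mathbf{a},Y)=\sum_{k=1}^\ell a_kY_k-a_mE_n$; $\mathfrak{C}=\{Y\mid\det M(\mathbf{a},Y)<0\text{ for some }\mathbf{a}\}$. $V(Y)=\{\mathbf{a}\in\mathbb{R}^n\mid \sum_{k=1}^\ell x_kY_k\mathbf{a}=x_m\mathbf{a}\text{ for some }(x_1,\ldots,x_m)^\top\neq\mathbf{0}\}$, $\hat V(Y)$ its linear span, $\mathfrak{S}=\{Y\mid\dim\hat V(Y)=n\}$. *)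

theory Defs
  imports "HOL-Analysis.Analysis"
begin

definition rho :: "nat \<Rightarrow> nat" where
  "rho k = (THE r. \<exists>a b c. k = (2*a+1) * 2^(b+4*c) \<and> b < 4 \<and> r = 2^b + 8*c)"

text \<open>Y = (Y_1; ...; Y_l) with l = m - 1 is given as a function on indices 1..l;
  a vector a in R^m is a function on indices 1..m.\<close>
definition Mmat :: "nat \<Rightarrow> (nat \<Rightarrow> real^'n^'n) \<Rightarrow> (nat \<Rightarrow> real) \<Rightarrow> real^'n^'n" where
  "Mmat m Y a = (\<Sum>k\<in>{1..m-1}. a k *\<^sub>R Y k) - a m *\<^sub>R mat 1"

definition setC :: "nat \<Rightarrow> (nat \<Rightarrow> real^'n^'n) set" where
  "setC m = {Y. \<exists>a. det (Mmat m Y a) < 0}"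

definition setV :: "nat \<Rightarrow> (nat \<Rightarrow> real^'n^'n) \<Rightarrow> (real^'n) set" where
  "setV m Y = {v. \<exists>x :: nat \<Rightarrow> real. (\<exists>i\<in>{1..m}. x i \<noteq> 0) \<and>
      (\<Sum>k\<in>{1..m-1}. x k *\<^sub>R Y k) *v v = x m *\<^sub>R v}"

definition setS :: "nat \<Rightarrow> (nat \<Rightarrow> real^'n^'n) set" where
  "setS m = {Y. dim (span (setV m Y)) = CARD('n)}"

end

theory Submission
  imports Defs
begin


datatype pa = PI | PJ | PP | PQ

fun flp :: "pa \<Rightarrow> bool \<Rightarrow> bool" where
  "flp PJ b = (\<not> b)" | "flp PQ b = (\<not> b)" | "flp _ b = b"

fun sg :: "pa \<Rightarrow> bool \<Rightarrow> real" where
  "sg PJ b = (if b then -1 else 1)" | "sg PP b = (if b then -1 else 1)" | "sg _ b = 1"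

fun cp :: "pa \<Rightarrow> pa \<Rightarrow> real" where
  "cp p q = (if p \<noteq> PI \<and> q \<noteq> PI \<and> p \<noteq> q then -1 else 1)"

fun jp :: "pa \<Rightarrow> real" where
  "jp p = (if p = PJ then -1 else 1)"

fun fl :: "pa list \<Rightarrow> bool list \<Rightarrow> bool list" where
  "fl (p#s) (b#bs) = flp p b # fl s bs"
| "fl _ bs = bs"

fun sgl :: "pa list \<Rightarrow> bool list \<Rightarrow> real" where
  "sgl (p#s) (b#bs) = sg p b * sgl s bs"
| "sgl _ _ = 1"

fun cl :: "pa list \<Rightarrow> pa list \<Rightarrow> real" where
  "cl (p#s) (q#t) = cp p q * cl s t"
| "cl _ _ = 1"

fun jsg :: "pa list \<Rightarrow> real" where
  "jsg [] = 1" | "jsg (p#s) = jp p * jsg s"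

lemma flp_flp: "flp p (flp p b) = b" by (cases p) auto
lemma flp_comm: "flp p (flp q b) = flp q (flp p b)" by (cases p; cases q) auto
lemma sg_anti: "sg p b * sg q (flp p b) = cp p q * sg q b * sg p (flp q b)"
  by (cases p; cases q; cases b) auto
lemma sg_sq: "sg p b * sg p (flp p b) = jp p"
  by (cases p; cases b) auto

lemma length_fl[simp]: "length (fl s bs) = length bs"
  by (induction s bs rule: fl.induct) auto

lemma fl_fl: "fl s (fl s bs) = bs"
  by (induction s bs rule: fl.induct) (auto simp: flp_flp)

lemma fl_comm: "fl t (fl s bs) = fl s (fl t bs)"
proof (induction bs arbitrary: s t)
  case Nil then show ?case by simp
next
  case (Cons b bs) then show ?case
    by (cases s; cases t) (auto simp: flp_comm)
qed

lemma sgl_anti: "length s = length bs \<Longrightarrow> length t = length bs \<Longrightarrow>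
  sgl s bs * sgl t (fl s bs) = cl s t * (sgl t bs * sgl s (fl t bs))"
proof (induction bs arbitrary: s t)
  case Nil then show ?case by simp
next
  case (Cons b bs)
  obtain p s' where s: "s = p#s'" using Cons.prems by (cases s) auto
  obtain q t' where t: "t = q#t'" using Cons.prems by (cases t) auto
  have IH: "sgl s' bs * sgl t' (fl s' bs) = cl s' t' * (sgl t' bs * sgl s' (fl t' bs))"
    using Cons.prems s t by (intro Cons.IH) auto
  have e1: "sgl s (b#bs) * sgl t (fl s (b#bs)) = (sg p b * sg q (flp p b)) * (sgl s' bs * sgl t' (fl s' bs))"
    unfolding s t by (simp only: fl.simps sgl.simps mult_ac)
  have e2: "cl s t * (sgl t (b#bs) * sgl s (fl t (b#bs))) = (cp p q * sg q b * sg p (flp q b)) * (cl s' t' * (sgl t' bs * sgl s' (fl t' bs)))"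
    unfolding s t by (simp only: fl.simps sgl.simps cl.simps mult_ac)
  show ?case unfolding e1 e2 by (simp only: sg_anti IH)
qed

lemma sgl_sq: "length s = length bs \<Longrightarrow> sgl s bs * sgl s (fl s bs) = jsg s"
proof (induction bs arbitrary: s)
  case Nil then show ?case by simp
next
  case (Cons b bs)
  obtain p s' where s: "s = p#s'" using Cons.prems by (cases s) auto
  have IH: "sgl s' bs * sgl s' (fl s' bs) = jsg s'" using Cons.prems s by (intro Cons.IH) auto
  have e1: "sgl s (b#bs) * sgl s (fl s (b#bs)) = (sg p b * sg p (flp p b)) * (sgl s' bs * sgl s' (fl s' bs))"
    unfolding s by (simp only: fl.simps sgl.simps mult_ac)
  have "sgl s (b#bs) * sgl s (fl s (b#bs)) = jp p * jsg s'" unfolding e1 IH sg_sq ..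
  then show ?case using s by simp
qed

lemma cl_append: "length a = length c \<Longrightarrow> cl (a@b) (c@d) = cl a c * cl b d"
proof (induction a arbitrary: c)
  case Nil then show ?case by simp
next
  case (Cons p a) then show ?case by (cases c) auto
qed

lemma jsg_append: "jsg (a@b) = jsg a * jsg b"
  by (induction a) auto

lemma cl_rep: "cl s (replicate n PI) = 1"
proof (induction n arbitrary: s)
  case 0 then show ?case by (cases s) auto
next
  case (Suc n) then show ?case by (cases s) auto
qed

lemma cl_rep2: "cl (replicate n PI) s = 1"
proof (induction n arbitrary: s)
  case 0 then show ?case by (cases s) auto
next
  case (Suc n) then show ?case by (cases s) auto
qed

lemma cl_self: "cl s s = 1"
  by (induction s) auto

lemma cl_sym: "cl s t = cl t s"
  by (induction s t rule: cl.induct) auto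




definition good :: "pa list list \<Rightarrow> nat \<Rightarrow> bool" where
  "good F L \<longleftrightarrow> distinct F \<and> (\<forall>s\<in>set F. length s = L \<and> jsg s = -1)
     \<and> (\<forall>s\<in>set F. \<forall>t\<in>set F. s \<noteq> t \<longrightarrow> cl s t = -1)"

fun base :: "nat \<Rightarrow> pa list list" where
  "base 0 = []"
| "base (Suc 0) = [[PJ]]"
| "base (Suc (Suc 0)) = [[PI,PJ],[PJ,PP],[PJ,PQ]]"
| "base _ = [[PI,PI,PJ],[PI,PJ,PP],[PJ,PI,PQ],[PJ,PP,PP],[PJ,PQ,PP],[PP,PJ,PQ],[PQ,PJ,PQ]]"

definition GG :: "pa list list" where
  "GG = [[PI,PI,PI,PJ],[PI,PI,PJ,PP],[PI,PJ,PI,PQ],[PI,PJ,PP,PP],[PI,PJ,PQ,PP],[PI,PP,PJ,PQ],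
         [PP,PQ,PJ,PQ],[PQ,PQ,PJ,PQ]]"

definition Gam :: "pa list" where "Gam = [PJ,PQ,PJ,PQ]"

fun famc :: "nat \<Rightarrow> nat \<Rightarrow> pa list list" where
  "famc b 0 = base b"
| "famc b (Suc c) = map (\<lambda>s. Gam @ s) (famc b c) @ map (\<lambda>g. g @ replicate (b + 4*c) PI) GG"

lemma good_base: "b < 4 \<Longrightarrow> good (base b) b"
proof -
  assume "b < 4"
  then consider "b = 0" | "b = 1" | "b = 2" | "b = 3" by linarith
  then show ?thesis
    by cases (simp_all add: good_def numeral_2_eq_2 numeral_3_eq_3)
qed

lemma len_base: "b < 4 \<Longrightarrow> length (base b) = 2^b - 1"
proof -
  assume "b < 4"
  then consider "b = 0" | "b = 1" | "b = 2" | "b = 3" by linarith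
  then show ?thesis
    by cases (simp_all add: numeral_2_eq_2 numeral_3_eq_3)
qed

lemma good_GG: "good GG 4"
  by (simp add: good_def GG_def)

lemma Gam_GG: "\<forall>g\<in>set GG. cl Gam g = -1" "length Gam = 4" "jsg Gam = 1" "Gam \<notin> set GG"
  by (simp_all add: GG_def Gam_def)

lemma len_famc: "b < 4 \<Longrightarrow> length (famc b c) = 2^b - 1 + 8*c"
  by (induction c) (simp_all add: len_base GG_def)

lemma good_famc: "b < 4 \<Longrightarrow> good (famc b c) (b + 4*c)"
proof (induction c)
  case 0 then show ?case using good_base by simp
next
  case (Suc c)
  let ?L = "b + 4*c"
  have IH: "good (famc b c) ?L" using Suc by simp
  let ?A = "map (\<lambda>s. Gam @ s) (famc b c)"
  let ?B = "map (\<lambda>g. g @ replicate ?L PI) GG"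
  have gg: "good GG 4" by (rule good_GG)
  have d1: "distinct ?A" using IH by (simp add: good_def distinct_map inj_on_def)
  have d2: "distinct ?B" using gg by (simp add: good_def distinct_map inj_on_def)
  have d3: "set ?A \<inter> set ?B = {}"
  proof (rule ccontr)
    assume "set ?A \<inter> set ?B \<noteq> {}"
    then obtain s g where s: "s \<in> set (famc b c)" and g: "g \<in> set GG" and e: "Gam @ s = g @ replicate ?L PI"
      by auto
    have "length g = 4" using gg g by (simp add: good_def)
    then have "Gam = g" using e Gam_GG(2) by (simp add: append_eq_append_conv)
    then show False using g Gam_GG(4) by simp
  qed
  have lA: "\<forall>s\<in>set ?A. length s = 4 + ?L \<and> jsg s = -1"
    using IH Gam_GG by (auto simp: good_def jsg_append)
  have lB: "\<forall>s\<in>set ?B. length s = 4 + ?L \<and> jsg s = -1"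
  proof
    fix s assume "s \<in> set ?B"
    then obtain g where g: "g \<in> set GG" "s = g @ replicate ?L PI" by auto
    have jr: "jsg (replicate n PI) = 1" for n by (induction n) auto
    show "length s = 4 + ?L \<and> jsg s = -1" using gg g by (auto simp: good_def jsg_append jr)
  qed
  have cAA: "cl s t = -1" if hs: "s \<in> set ?A" "t \<in> set ?A" "s \<noteq> t" for s t
  proof -
    obtain s' t' where "s' \<in> set (famc b c)" "t' \<in> set (famc b c)" "s = Gam @ s'" "t = Gam @ t'"
      using hs(1,2) by auto
    then show ?thesis using IH hs by (auto simp: good_def cl_append cl_self)
  qed
  have cBB: "cl s t = -1" if hs: "s \<in> set ?B" "t \<in> set ?B" "s \<noteq> t" for s t
  proof -
    obtain s' t' where "s' \<in> set GG" "t' \<in> set GG" "s = s' @ replicate ?L PI" "t = t' @ replicate ?L PI"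
      using hs(1,2) by auto
    then show ?thesis using gg hs by (auto simp: good_def cl_append cl_rep)
  qed
  have cAB: "cl s t = -1" if hs: "s \<in> set ?A" "t \<in> set ?B" for s t
  proof -
    obtain s' t' where "s' \<in> set (famc b c)" "t' \<in> set GG" "s = Gam @ s'" "t = t' @ replicate ?L PI"
      using hs by auto
    then show ?thesis using gg Gam_GG by (auto simp: good_def cl_append cl_rep)
  qed
  have "good (?A @ ?B) (4 + ?L)"
    unfolding good_def
    using d1 d2 d3 lA lB cAA cBB cAB cl_sym by (auto simp del: map_append)
  then show ?case by (simp add: algebra_simps)
qed




definition opT :: "pa list \<Rightarrow> (bool list \<times> nat \<Rightarrow> real) \<Rightarrow> bool list \<times> nat \<Rightarrow> real" where
  "opT s w p = sgl s (fst p) * w (fl s (fst p), snd p)"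

definition Sop :: "pa list list \<Rightarrow> nat \<Rightarrow> (nat \<Rightarrow> real) \<Rightarrow> (bool list \<times> nat \<Rightarrow> real) \<Rightarrow> bool list \<times> nat \<Rightarrow> real" where
  "Sop F d x w p = (\<Sum>k\<in>{1..d}. x k * opT (F!(k-1)) w p)"

lemma sum_pair_anti:
  fixes A :: "nat \<Rightarrow> nat \<Rightarrow> real"
  assumes "finite D" "\<And>k l. k \<in> D \<Longrightarrow> l \<in> D \<Longrightarrow> k \<noteq> l \<Longrightarrow> A k l = - A l k"
  shows "(\<Sum>k\<in>D. \<Sum>l\<in>D. A k l) = (\<Sum>k\<in>D. A k k)"
proof -
  have "(\<Sum>k\<in>D. \<Sum>l\<in>D. A k l) = (\<Sum>k\<in>D. \<Sum>l\<in>D. A l k)"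
    by (rule sum.swap)
  then have "2 * (\<Sum>k\<in>D. \<Sum>l\<in>D. A k l) = (\<Sum>k\<in>D. \<Sum>l\<in>D. A k l + A l k)"
    by (simp add: sum.distrib)
  also have "\<dots> = (\<Sum>k\<in>D. \<Sum>l\<in>D. if l = k then 2 * A k k else 0)"
    proof (rule sum.cong[OF refl], rule sum.cong[OF refl])
    fix k l assume kl: "k \<in> D" "l \<in> D"
    show "A k l + A l k = (if l = k then 2 * A k k else 0)"
    proof (cases "l = k")
      case True then show ?thesis by simp
    next
      case False
      have "A k l = - A l k" using assms(2)[OF kl] False by blast
      then show ?thesis using False by simp
    qed
  qed
  also have "\<dots> = 2 * (\<Sum>k\<in>D. A k k)"
    using assms(1) by (simp add: sum_distrib_left)
  finally show ?thesis by simp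
qed

lemma cliff:
  assumes g: "good F L" and d: "d \<le> length F" and p: "length (fst p) = L"
  shows "Sop F d x (Sop F d x w) p = - (\<Sum>k\<in>{1..d}. (x k)^2) * w p"
proof -
  obtain bs r where pp: "p = (bs, r)" by (cases p)
  define s where "s k = F!(k-1)" for k
  define A where "A k l = x k * x l * (sgl (s k) bs * sgl (s l) (fl (s k) bs)) * w (fl (s l) (fl (s k) bs), r)" for k l
  have sF: "k \<in> {1..d} \<Longrightarrow> s k \<in> set F" for k using d by (auto simp: s_def)
  have ls: "k \<in> {1..d} \<Longrightarrow> length (s k) = length bs" for k using sF g p pp by (auto simp: good_def)
  have "Sop F d x (Sop F d x w) p = (\<Sum>k\<in>{1..d}. x k * (sgl (s k) bs * (\<Sum>l\<in>{1..d}. x l * (sgl (s l) (fl (s k) bs) * w (fl (s l) (fl (s k) bs), r)))))"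
    unfolding Sop_def opT_def pp s_def by simp
  also have "\<dots> = (\<Sum>k\<in>{1..d}. \<Sum>l\<in>{1..d}. A k l)"
    unfolding A_def by (simp add: sum_distrib_left mult_ac)
  also have "\<dots> = (\<Sum>k\<in>{1..d}. A k k)"
  proof (rule sum_pair_anti)
    fix k l assume kl: "k \<in> {1..d}" "l \<in> {1..d}" "k \<noteq> l"
    have "s k \<noteq> s l" using kl d g unfolding s_def good_def
      by (auto simp: nth_eq_iff_index_eq)
    then have c: "cl (s k) (s l) = -1" using sF kl g unfolding good_def by blast
    have "A k l = x k * x l * (cl (s k) (s l) * (sgl (s l) bs * sgl (s k) (fl (s l) bs))) * w (fl (s k) (fl (s l) bs), r)"
      unfolding A_def sgl_anti[OF ls[OF kl(1)] ls[OF kl(2)]] fl_comm[of "s l" "s k" bs] ..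
    also have "\<dots> = - A l k" unfolding A_def c by (simp add: mult_ac)
    finally show "A k l = - A l k" .
  qed simp
  also have "\<dots> = (\<Sum>k\<in>{1..d}. (- ((x k)^2 * w p)))"
  proof (rule sum.cong[OF refl])
    fix k assume k: "k \<in> {1..d}"
    have j: "jsg (s k) = -1" using sF[OF k] g by (auto simp: good_def)
    have "A k k = x k * x k * jsg (s k) * w (bs, r)"
      unfolding A_def sgl_sq[OF ls[OF k]] fl_fl ..
    then show "A k k = - ((x k)^2 * w p)"
      unfolding j pp by (simp add: power2_eq_square)
  qed
  finally show ?thesis by (simp add: sum_distrib_right sum_negf)
qed

lemma eigen_zero:
  assumes g: "good F L" and d: "d \<le> length F" and x: "\<exists>k\<in>{1..d}. x k \<noteq> 0"
    and e: "\<And>p. length (fst p) = L \<Longrightarrow> snd p < q \<Longrightarrow> Sop F d x w p = lam * w p"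
    and p: "length (fst p) = L" "snd p < q"
  shows "w p = 0"
proof -
  have "Sop F d x (Sop F d x w) p = lam * Sop F d x w p"
  proof -
    have "Sop F d x (Sop F d x w) p = (\<Sum>k\<in>{1..d}. x k * (sgl (F!(k-1)) (fst p) * Sop F d x w (fl (F!(k-1)) (fst p), snd p)))"
      unfolding Sop_def[of F d x "Sop F d x w"] opT_def by simp
    also have "\<dots> = (\<Sum>k\<in>{1..d}. x k * (sgl (F!(k-1)) (fst p) * (lam * w (fl (F!(k-1)) (fst p), snd p))))"
      using e p by simp
    also have "\<dots> = lam * Sop F d x w p"
      unfolding Sop_def opT_def by (simp add: sum_distrib_left algebra_simps)
    finally show ?thesis .
  qed
  then have "- (\<Sum>k\<in>{1..d}. (x k)^2) * w p = lam^2 * w p"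
    using cliff[OF g d p(1)] e[OF p] by (simp add: power2_eq_square)
  then have "((\<Sum>k\<in>{1..d}. (x k)^2) + lam^2) * w p = 0" by (simp add: algebra_simps)
  moreover have "(\<Sum>k\<in>{1..d}. (x k)^2) > 0"
  proof -
    obtain k where k: "k \<in> {1..d}" "x k \<noteq> 0" using x by blast
    have "(x k)^2 \<le> (\<Sum>k\<in>{1..d}. (x k)^2)"
      using k by (intro member_le_sum) auto
    moreover have "(x k)^2 > 0" using k by simp
    ultimately show ?thesis by linarith
  qed
  ultimately have "((\<Sum>k\<in>{1..d}. (x k)^2) + lam^2) \<noteq> 0"
    by (metis add_pos_nonneg less_irrefl zero_le_power2)
  then show ?thesis using \<open>((\<Sum>k\<in>{1..d}. (x k)^2) + lam^2) * w p = 0\<close> by simp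
qed




lemma odd_pow_unique:
  fixes a a' e e' :: nat
  shows "(2*a+1) * 2^e = (2*a'+1) * 2^e' \<Longrightarrow> e = e'"
proof (induction e arbitrary: e')
  case 0
  show ?case
  proof (cases e')
    case 0 then show ?thesis by simp
  next
    case (Suc f)
    have "even ((2*a'+1) * 2^e')" using Suc by simp
    moreover have "odd ((2*a+1) * 2^0)" by simp
    ultimately show ?thesis using "0.prems" by metis
  qed
next
  case (Suc e)
  show ?case
  proof (cases e')
    case 0
    have "even ((2*a+1) * 2^(Suc e))" by simp
    moreover have "odd ((2*a'+1) * 2^e')" using 0 by simp
    ultimately show ?thesis using Suc.prems by metis
  next
    case (Suc f)
    have "2 * ((2*a+1) * 2^e) = 2 * ((2*a'+1) * 2^f)"
      using Suc.prems \<open>e' = Suc f\<close> by (simp add: mult.left_commute)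
    then have "(2*a+1) * 2^e = (2*a'+1) * 2^f" by simp
    then show ?thesis using Suc.IH \<open>e' = Suc f\<close> by simp
  qed
qed

lemma rho_eq:
  assumes k: "k = (2*a+1) * 2^(b+4*c)" and b: "b < (4::nat)"
  shows "rho k = 2^b + 8*c"
  unfolding rho_def
proof (rule the_equality)
  show "\<exists>a' b' c'. k = (2*a'+1) * 2^(b'+4*c') \<and> b' < 4 \<and> 2^b + 8*c = 2^b' + 8*c'"
    using k b by blast
next
  fix r assume "\<exists>a' b' c'. k = (2*a'+1) * 2^(b'+4*c') \<and> b' < 4 \<and> r = 2^b' + 8*c'"
  then obtain a' b' c' where h: "k = (2*a'+1) * 2^(b'+4*c')" "b' < 4" "r = 2^b' + 8*c'" by blast
  have "b + 4*c = b' + 4*c'" using odd_pow_unique k h(1) by metis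
  then have "(b + 4*c) mod 4 = (b' + 4*c') mod 4" by simp
  then have bb: "b = b'" using b h(2) by simp
  then have "c = c'" using \<open>b + 4*c = b' + 4*c'\<close> by simp
  note bb this
  then show "r = 2^b + 8*c" using h(3) bb by simp
qed

lemma odd_decomp: "(k::nat) > 0 \<Longrightarrow> \<exists>a e. k = (2*a+1) * 2^(e::nat)"
proof (induction k rule: less_induct)
  case (less k)
  show ?case
  proof (cases "even k")
    case True
    then obtain j where j: "k = 2*j" by blast
    then have "j < k" "j > 0" using less.prems by auto
    then obtain a e where "j = (2*a+1) * 2^e" using less.IH by blast
    then have "k = (2*a+1) * 2^(Suc e)" using j by simp
    then show ?thesis by blast
  next
    case False
    then have "k = (2*(k div 2)+1) * 2^0" by simp
    then show ?thesis by blast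
  qed
qed

lemma rho_info:
  assumes "k > 0"
  shows "\<exists>a b c. k = (2*a+1) * 2^(b+4*c) \<and> b < 4 \<and> rho k = 2^b + 8*c"
proof -
  obtain a e where "k = (2*a+1) * 2^e" using odd_decomp assms by blast
  moreover have "e = e mod 4 + 4 * (e div 4)" by simp
  ultimately have "k = (2*a+1) * 2^(e mod 4 + 4 * (e div 4))" by metis
  moreover have "e mod 4 < 4" by simp
  ultimately show ?thesis using rho_eq by blast
qed




definition Ymat :: "('n::finite \<Rightarrow> (bool list \<times> nat) option) \<Rightarrow> pa list \<Rightarrow> real^'n^'n" where
  "Ymat \<phi> s = (\<chi> i j. case \<phi> i of None \<Rightarrow> 0
      | Some p \<Rightarrow> (if j = inv \<phi> (Some (fl s (fst p), snd p)) then sgl s (fst p) else 0))"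

lemma Ymat_mult: "(Ymat \<phi> s *v v) $ i = (case \<phi> i of None \<Rightarrow> 0 | Some p \<Rightarrow> opT s (\<lambda>p. v $ inv \<phi> (Some p)) p)"
proof (cases "\<phi> i")
  case None then show ?thesis by (simp add: Ymat_def matrix_vector_mult_def)
next
  case (Some p)
  obtain bs r where p: "p = (bs, r)" by (cases p)
  define c where "c = inv \<phi> (Some (fl s bs, r))"
  have e: "Ymat \<phi> s $ i $ j = (if j = c then sgl s bs else 0)" for j
    by (simp add: Ymat_def Some p c_def)
  have "(Ymat \<phi> s *v v) $ i = (\<Sum>j\<in>UNIV. Ymat \<phi> s $ i $ j * v $ j)"
    by (simp add: matrix_vector_mult_def)
  also have "\<dots> = (\<Sum>j\<in>UNIV. (if j = c then sgl s bs * v $ c else 0))"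
    unfolding e by (intro sum.cong) auto
  also have "\<dots> = sgl s bs * v $ c" by simp
  finally show ?thesis using Some p c_def by (simp add: opT_def)
qed

lemma sum_mult_comp:
  fixes A :: "nat \<Rightarrow> real^'n::finite^'n"
  shows "((\<Sum>k\<in>D. x k *\<^sub>R A k) *v v) $ i = (\<Sum>k\<in>D. x k * (A k *v v) $ i)"
proof -
  have "((\<Sum>k\<in>D. x k *\<^sub>R A k) *v v) $ i = (\<Sum>j\<in>UNIV. (\<Sum>k\<in>D. x k * A k $ i $ j) * v $ j)"
    by (simp add: matrix_vector_mult_def)
  also have "\<dots> = (\<Sum>k\<in>D. x k * (\<Sum>j\<in>UNIV. A k $ i $ j * v $ j))"
    by (simp add: sum_distrib_right sum_distrib_left mult.assoc) (rule sum.swap)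
  finally show ?thesis by (simp add: matrix_vector_mult_def)
qed

lemma dim_le_one:
  fixes i0 :: "'n::finite"
  assumes "S \<subseteq> span {axis i0 (1::real)}"
  shows "dim S \<le> 1"
  using dim_le_card[OF assms] by simp

lemma det_neg_one: "det (- mat 1 :: real^'n::finite^'n) = (-1) ^ CARD('n)"
proof -
  have "det (- mat 1 :: real^'n^'n) = (\<Prod>i\<in>UNIV. (- mat 1 :: real^'n^'n) $ i $ i)"
    by (rule det_diagonal) (simp add: mat_def)
  also have "\<dots> = (\<Prod>i\<in>(UNIV::'n set). -1)" by (simp add: mat_def)
  finally show ?thesis by simp
qed

theorem mainTheorem11:
  fixes m :: nat
  assumes "3 \<le> m" and "m \<le> CARD('n::finite)" and "m \<le> rho (CARD('n) - 1)"
  shows "\<not> (setC m \<subseteq> (setS m :: (nat \<Rightarrow> real^'n^'n) set))"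
proof -
  define N where "N = CARD('n)"
  have m3: "3 \<le> m" and mn: "m \<le> N" and mr: "m \<le> rho (N - 1)" using assms N_def by auto
  have kpos: "N - 1 > 0" using m3 mn by simp
  obtain a b c where abc: "N - 1 = (2*a+1) * 2^(b+4*c)" "b < 4" "rho (N-1) = 2^b + 8*c"
    using rho_info[OF kpos] by blast
  define L where "L = b + 4*c"
  define q where "q = 2*a+1"
  define F where "F = famc b c"
  have gF: "good F L" using good_famc[OF abc(2)] F_def L_def by simp
  have m_le: "m \<le> 2^b + 8*c" using mr abc by simp
  have b1: "(1::nat) \<le> 2^b" by simp
  have lenF: "m - 1 \<le> length F" using len_famc[OF abc(2)] m_le b1 F_def by simp
  have L1: "L \<ge> 1"
  proof (rule ccontr)
    assume "\<not> L \<ge> 1"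
    then have "b = 0" "c = 0" using L_def by auto
    then show False using m_le m3 by simp
  qed
  have Nodd: "odd N"
  proof -
    obtain L' where L': "L = Suc L'" using L1 by (cases L) auto
    have "N - 1 = (2*a+1) * 2^(Suc L')" using abc(1) L_def L' by simp
    then have "N - 1 = 2 * ((2*a+1) * 2^L')" by simp
    then have "even (N - 1)" by simp
    then show ?thesis using kpos by simp
  qed
  define I where "I = {p::bool list \<times> nat. length (fst p) = L \<and> snd p < q}"
  have Ieq: "I = {bs::bool list. length bs = L} \<times> {..<q}" unfolding I_def by auto
  have cl2: "card {bs::bool list. length bs = L} = 2^L"
    using card_lists_length_eq[of "UNIV::bool set" L] by simp
  have fl2: "finite {bs::bool list. length bs = L}"
    using finite_lists_length_eq[of "UNIV::bool set" L] by simp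
  have finI: "finite I" using Ieq fl2 by simp
  have cardI: "card I = N - 1" using Ieq cl2 abc(1) L_def q_def by (simp add: card_cartesian_product mult.commute)
  define Om where "Om = insert None (Some ` I)"
  have finO: "finite Om" using finI Om_def by simp
  have cardO: "card Om = N"
  proof -
    have "card Om = Suc (card (Some ` I))" using finI Om_def by (simp add: card_insert_if)
    also have "\<dots> = Suc (card I)" by (simp add: card_image)
    finally show ?thesis using cardI kpos by simp
  qed
  obtain \<phi> :: "'n \<Rightarrow> (bool list \<times> nat) option" where phi: "bij_betw \<phi> UNIV Om"
    using finite_same_card_bij[OF _ finO, of "UNIV::'n set"] cardO N_def by auto
  have inv_l: "inv \<phi> (\<phi> i) = i" for i using bij_betw_inv_into_left[OF phi] by simp
  have inv_r: "zz \<in> Om \<Longrightarrow> \<phi> (inv \<phi> zz) = zz" for zz using bij_betw_inv_into_right[OF phi] by simp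
  have phiO: "\<phi> i \<in> Om" for i using phi by (auto simp: bij_betw_def)
  define Y where "Y k = Ymat \<phi> (F!(k-1))" for k
  have YC: "Y \<in> setC m"
  proof -
    define aa where "aa i = (if i = m then 1 else (0::real))" for i
    have "Mmat m Y aa = - mat 1"
    proof -
      have "(\<Sum>k\<in>{1..m-1}. aa k *\<^sub>R Y k) = 0"
        by (rule sum.neutral) (auto simp: aa_def)
      then show ?thesis unfolding Mmat_def by (simp add: aa_def)
    qed
    moreover have "det (- mat 1 :: real^'n^'n) = (-1)^CARD('n)" by (rule det_neg_one)
    ultimately have "det (Mmat m Y aa) = -1" using Nodd N_def by simp
    then have "\<exists>a. det (Mmat m Y a) < 0" by (intro exI[of _ aa]) simp
    then show ?thesis unfolding setC_def by simp
  qed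
  have V0: "\<forall>i. \<phi> i \<noteq> None \<longrightarrow> v $ i = 0" if vV: "v \<in> setV m Y" for v
  proof -
    obtain x where ex: "\<exists>i\<in>{1..m}. x i \<noteq> 0"
      and eq: "(\<Sum>k\<in>{1..m-1}. x k *\<^sub>R Y k) *v v = x m *\<^sub>R v"
      using vV unfolding setV_def by blast
    have eqc: "(\<Sum>k\<in>{1..m-1}. x k * (Y k *v v) $ i) = x m * v $ i" for i
      using arg_cong[OF eq, of "\<lambda>u. u $ i"] by (simp add: sum_mult_comp)
    show ?thesis
    proof (cases "\<exists>k\<in>{1..m-1}. x k \<noteq> 0")
      case False
      have "x m \<noteq> 0"
      proof -
        obtain j where j: "j \<in> {1..m}" "x j \<noteq> 0" using ex by blast
        show ?thesis
        proof (cases "j = m")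
          case True then show ?thesis using j by simp
        next
          case False then have "j \<in> {1..m-1}" using j by auto
          then show ?thesis using False j \<open>\<not> (\<exists>k\<in>{1..m-1}. x k \<noteq> 0)\<close> by blast
        qed
      qed
      moreover have "x m * v $ i = 0" for i using eqc[of i] False by simp
      ultimately show ?thesis by simp
    next
      case True
      define w where "w p = v $ inv \<phi> (Some p)" for p
      have e: "Sop F (m-1) x w p = x m * w p" if "length (fst p) = L" "snd p < q" for p
      proof -
        have pI: "Some p \<in> Om" using that I_def Om_def by auto
        define i where "i = inv \<phi> (Some p)"
        have pi: "\<phi> i = Some p" using inv_r[OF pI] i_def by simp
        have "(Y k *v v) $ i = opT (F!(k-1)) w p" for k
          unfolding Y_def Ymat_mult pi w_def by simp
        then show ?thesis using eqc[of i] unfolding Sop_def w_def i_def by simp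
      qed
      show ?thesis
      proof (intro allI impI)
        fix i assume "\<phi> i \<noteq> None"
        then obtain p where pi: "\<phi> i = Some p" by blast
        then have "p \<in> I" using phiO[of i] Om_def by auto
        then have "w p = 0" using eigen_zero[OF gF lenF True e] I_def by blast
        then show "v $ i = 0" using w_def pi inv_l[of i] by simp
      qed
    qed
  qed
  define i0 where "i0 = inv \<phi> None"
  have pi0: "\<phi> i0 = None" using inv_r[of None] Om_def i0_def by simp
  have "setV m Y \<subseteq> span {axis i0 (1::real)}"
  proof
    fix v assume vV: "v \<in> setV m Y"
    have "v = v $ i0 *\<^sub>R axis i0 1"
    proof (subst vec_eq_iff, intro allI)
      fix i show "v $ i = (v $ i0 *\<^sub>R axis i0 1) $ i"
      proof (cases "i = i0")
        case True then show ?thesis by (simp add: axis_def)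
      next
        case False
        then have "\<phi> i \<noteq> None" using pi0 inv_l by metis
        then show ?thesis using V0[OF vV] False by (simp add: axis_def)
      qed
    qed
    then show "v \<in> span {axis i0 1}" by (metis span_base span_mul singletonI)
  qed
  then have "dim (setV m Y) \<le> 1" by (rule dim_le_one)
  then have "Y \<notin> setS m" using m3 mn unfolding setS_def N_def by simp
  then show ?thesis using YC by blast
qed


end
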